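(* Let $\Psi:(0,\infty)^2\to[0,\infty)$ be measurable and symmetric, and assume there are $\beta>0$, $k>0$ with $\Psi(\zeta,\eta)\le k(\zeta\eta)^{-\beta}$ on $(0,1)^2$, $\Psi(\zeta,\eta)\le k\eta\zeta^{-\beta}$ on $(0,1)\times(1,\infty)$, and $\Psi(\zeta,\eta)\le k(\zeta+\eta)$ on $(1,\infty)^2$. Let $T\in(0,\infty]$, let $g^{in}\in L^1_{-2\beta,1}(0,\infty)$ be non-negative, and let $g$ be a weak solution on $[0,T)$ of the Smoluchowski coagulation equation with kernel $\Psi$ and initial condition $g^{in}$. Then $\int_0^\infty\zeta g(\zeta,t)\,d\zeta=\int_0^\infty\zeta g^{in}(\zeta)\,d\zeta$ for all $t\in(0,T)$.
   Context: $L^1_{-2\beta,1}(0,\infty):=L^1((0,\infty);(\zeta^{-2\beta}+\zeta)d\zeta)$. A weak solution on $[0,T)$ is a non-negative function $g\in\mathcal{C}([0,T);L^1(0,\infty))\cap L^\infty(0,T;L^1_{-2\beta,1}(0,\infty))$ such that for every $t\in(0,T)$ and every $\omega\in L^\infty(0,\infty)$, $\int_0^\infty[g(\zeta,t)-g^{in}(\zeta)]\omega(\zeta)d\zeta=\frac12\int_0^t\int_0^\infty\int_0^\infty\tilde\omega(\zeta,\eta)\Psi(\zeta,\eta)g(\zeta,s)g(\eta,s)d\eta d\zeta ds$, where $\tilde\omega(\zeta,\eta):=\omega(\zeta+\eta)-\omega(\zeta)-\omega(\eta)$. *)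

theory Defs
  imports "HOL-Analysis.Analysis"
begin

definition time_int :: "ereal \<Rightarrow> real set" where
  "time_int T = {t. 0 \<le> t \<and> ereal t < T}"

definition in_L1_weighted :: "real \<Rightarrow> (real \<Rightarrow> real) \<Rightarrow> bool" where
  "in_L1_weighted \<beta> f \<longleftrightarrow>
     set_integrable lborel {0<..} (\<lambda>z. (z powr (-2*\<beta>) + z) * f z)"

definition kernel_ok :: "(real \<Rightarrow> real \<Rightarrow> real) \<Rightarrow> real \<Rightarrow> real \<Rightarrow> bool" where
  "kernel_ok \<Psi> \<beta> k \<longleftrightarrow>
     (\<lambda>p. if 0 < fst p \<and> 0 < snd p then \<Psi> (fst p) (snd p) else 0) \<in> borel_measurable borel \<and>
     (\<forall>z>0. \<forall>y>0. 0 \<le> \<Psi> z y \<and> \<Psi> z y = \<Psi> y z) \<and>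
     (\<forall>z y. 0 < z \<and> z < 1 \<and> 0 < y \<and> y < 1 \<longrightarrow> \<Psi> z y \<le> k * (z * y) powr (-\<beta>)) \<and>
     (\<forall>z y. 0 < z \<and> z < 1 \<and> 1 < y \<longrightarrow> \<Psi> z y \<le> k * y * z powr (-\<beta>)) \<and>
     (\<forall>z y. 1 < z \<and> 1 < y \<longrightarrow> \<Psi> z y \<le> k * (z + y))"

definition weak_solution ::
  "(real \<Rightarrow> real \<Rightarrow> real) \<Rightarrow> real \<Rightarrow> ereal \<Rightarrow> (real \<Rightarrow> real) \<Rightarrow> (real \<Rightarrow> real \<Rightarrow> real) \<Rightarrow> bool" where
  "weak_solution \<Psi> \<beta> T gin g \<longleftrightarrow>
     \<comment> \<open>(jointly measurable representative)\<close>
     (\<lambda>p. if 0 < fst p \<and> snd p \<in> time_int T then g (fst p) (snd p) else 0) \<in> borel_measurable borel \<and>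
     \<comment> \<open>non-negativity\<close>
     (\<forall>t\<in>time_int T. AE z in lborel. z > 0 \<longrightarrow> 0 \<le> g z t) \<and>
     \<comment> \<open>g in C([0,T); L^1(0,infinity))\<close>
     (\<forall>t\<in>time_int T. set_integrable lborel {0<..} (\<lambda>z. g z t)) \<and>
     (\<forall>t0\<in>time_int T.
        ((\<lambda>t. LINT z:{0<..}|lborel. \<bar>g z t - g z t0\<bar>) \<longlongrightarrow> 0) (at t0 within time_int T)) \<and>
     \<comment> \<open>g in L^infinity(0,T; L^1_{-2beta,1}(0,infinity))\<close>
     (\<exists>C. AE t in lborel. (0 < t \<and> ereal t < T) \<longrightarrow>
          set_integrable lborel {0<..} (\<lambda>z. (z powr (-2*\<beta>) + z) * g z t) \<and>
          (LINT z:{0<..}|lborel. (z powr (-2*\<beta>) + z) * \<bar>g z t\<bar>) \<le> C) \<and>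
     \<comment> \<open>weak formulation\<close>
     (\<forall>t. 0 < t \<and> ereal t < T \<longrightarrow>
        (\<forall>\<omega>::real\<Rightarrow>real. \<omega> \<in> borel_measurable lborel \<and> bounded (\<omega> ` {0<..}) \<longrightarrow>
           (LINT z:{0<..}|lborel. (g z t - gin z) * \<omega> z) =
           1/2 * (LINT s:{0<..<t}|lborel.
                    (LINT z:{0<..}|lborel. (LINT y:{0<..}|lborel.
                        (\<omega> (z + y) - \<omega> z - \<omega> y) * \<Psi> z y * g z s * g y s)))))"

end

theory Submission
  imports Defs
begin


definition wt :: "real \<Rightarrow> real \<Rightarrow> real" where
  "wt \<beta> z = z powr (-2*\<beta>) + z"

lemma om_bound:
  fixes z y n :: real
  assumes "z > 0" "y > 0" "n \<ge> 0"
  shows "\<bar>min (z+y) n - min z n - min y n\<bar> \<le> min z y"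
  using assms by (auto simp: min_def abs_if)

lemma om_zero:
  fixes z y n :: real
  assumes "z > 0" "y > 0" "z + y \<le> n"
  shows "min (z+y) n - min z n - min y n = 0"
  using assms by (auto simp: min_def)

lemma wt_ge: assumes "z > 0" shows "z \<le> wt \<beta> z" "0 \<le> wt \<beta> z"
  using assms by (auto simp: wt_def)

lemma pow_le_wt: assumes "z > 0" "z < 1" "\<beta> > 0" "a \<ge> -2*\<beta>"
  shows "z powr a \<le> wt \<beta> z"
proof -
  have "z powr a \<le> z powr (-2*\<beta>)"
    using assms by (intro powr_mono') auto
  thus ?thesis using assms by (simp add: wt_def)
qed

lemma kernel_bound:
  assumes K: "kernel_ok \<Psi> \<beta> k" and b: "\<beta> > 0" and k: "k > 0"
    and z: "z > 0" "z \<noteq> 1" and y: "y > 0" "y \<noteq> 1"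
  shows "min z y * \<Psi> z y \<le> 2*k * wt \<beta> z * wt \<beta> y"
proof -
  have nn: "0 \<le> \<Psi> z y" and sym: "\<Psi> z y = \<Psi> y z" using K z y unfolding kernel_ok_def by auto
  have w: "0 \<le> wt \<beta> z" "0 \<le> wt \<beta> y" "z \<le> wt \<beta> z" "y \<le> wt \<beta> y" using wt_ge z y by auto
  consider "z < 1" "y < 1" | "z < 1" "y > 1" | "z > 1" "y < 1" | "z > 1" "y > 1"
    using z y by fastforce
  then show ?thesis
  proof cases
    case 1
    have P: "\<Psi> z y \<le> k * (z powr (-\<beta>) * y powr (-\<beta>))"
      proof -
      have "\<Psi> z y \<le> k * (z * y) powr (-\<beta>)" using K 1 z y unfolding kernel_ok_def by blast
      thus ?thesis using z y by (simp add: powr_mult)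
    qed
    have a: "z powr (-\<beta>) \<le> wt \<beta> z" "y powr (-\<beta>) \<le> wt \<beta> y"
      using pow_le_wt 1 z y b by auto
    have "min z y * \<Psi> z y \<le> \<Psi> z y" using 1 nn z y
      by (intro mult_left_le_one_le[of "\<Psi> z y" "min z y", simplified mult.commute]) auto
    also have "\<dots> \<le> k * (wt \<beta> z * wt \<beta> y)"
      using P a k by (smt (verit) mult_left_mono mult_mono powr_ge_zero)
    also have "\<dots> \<le> 2*k * wt \<beta> z * wt \<beta> y" using k w by (simp add: mult_nonneg_nonneg)
    finally show ?thesis .
  next
    case 2
    have P: "\<Psi> z y \<le> k * y * z powr (-\<beta>)"
      using K 2 z y unfolding kernel_ok_def by blast
    have a: "z * z powr (-\<beta>) \<le> wt \<beta> z"
    proof -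
      have "z * z powr (-\<beta>) = z powr (1 - \<beta>)" using z by (simp add: powr_diff powr_minus divide_inverse)
      also have "\<dots> \<le> wt \<beta> z" using pow_le_wt 2 z b by auto
      finally show ?thesis .
    qed
    have "min z y * \<Psi> z y = z * \<Psi> z y" using 2 by simp
    also have "\<dots> \<le> z * (k * y * z powr (-\<beta>))" using P z by simp
    also have "\<dots> = k * y * (z * z powr (-\<beta>))" by simp
    also have "\<dots> \<le> k * wt \<beta> y * wt \<beta> z"
    proof -
      have "y * (z * z powr (-\<beta>)) \<le> wt \<beta> y * wt \<beta> z"
        using a w y z by (intro mult_mono) auto
      thus ?thesis using k by (simp add: mult.assoc)
    qed
    also have "\<dots> \<le> 2*k * wt \<beta> z * wt \<beta> y" using k w by (simp add: mult_nonneg_nonneg)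
    finally show ?thesis .
  next
    case 3
    have P: "\<Psi> y z \<le> k * z * y powr (-\<beta>)"
      using K 3 z y unfolding kernel_ok_def by blast
    have a: "y * y powr (-\<beta>) \<le> wt \<beta> y"
    proof -
      have "y * y powr (-\<beta>) = y powr (1 - \<beta>)" using y by (simp add: powr_diff powr_minus divide_inverse)
      also have "\<dots> \<le> wt \<beta> y" using pow_le_wt 3 y b by auto
      finally show ?thesis .
    qed
    have "min z y * \<Psi> z y = y * \<Psi> y z" using 3 sym by simp
    also have "\<dots> \<le> y * (k * z * y powr (-\<beta>))" using P y by simp
    also have "\<dots> = k * z * (y * y powr (-\<beta>))" by simp
    also have "\<dots> \<le> k * wt \<beta> z * wt \<beta> y"
    proof -
      have "z * (y * y powr (-\<beta>)) \<le> wt \<beta> z * wt \<beta> y"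
        using a w y z by (intro mult_mono) auto
      thus ?thesis using k by (simp add: mult.assoc)
    qed
    also have "\<dots> \<le> 2*k * wt \<beta> z * wt \<beta> y" using k w by (simp add: mult_nonneg_nonneg)
    finally show ?thesis .
  next
    case 4
    have P: "\<Psi> z y \<le> k * (z + y)"
      using K 4 unfolding kernel_ok_def by blast
    have "min z y * \<Psi> z y \<le> min z y * (k * (z + y))" using P z y by (intro mult_left_mono) auto
    also have "\<dots> \<le> 2 * k * (z * y)"
    proof -
      have "min z y * (z + y) \<le> 2 * (z * y)" using z y
        by (cases "z \<le> y") (auto simp: min_def algebra_simps intro: mult_right_mono)
      hence "k * (min z y * (z + y)) \<le> k * (2 * (z * y))" using k by (intro mult_left_mono) auto
      thus ?thesis by (simp add: algebra_simps)
    qed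
    also have "\<dots> \<le> 2*k * wt \<beta> z * wt \<beta> y"
    proof -
      have "z * y \<le> wt \<beta> z * wt \<beta> y" using w z y by (intro mult_mono) auto
      thus ?thesis using k by (simp add: mult.assoc)
    qed
    finally show ?thesis .
  qed
qed



lemma wt_meas[measurable]: "wt \<beta> \<in> borel_measurable borel"
  unfolding wt_def[abs_def] by measurable

lemma core:
  fixes P :: "real \<Rightarrow> real \<Rightarrow> real" and Pm :: "real \<times> real \<Rightarrow> real" and gg gm :: "real \<Rightarrow> real"
  assumes Pm[measurable]: "Pm \<in> borel_measurable borel"
    and Peq: "\<And>z y. z>0 \<Longrightarrow> y>0 \<Longrightarrow> Pm (z,y) = P z y"
    and gm[measurable]: "gm \<in> borel_measurable borel" and geq: "\<And>z. z>0 \<Longrightarrow> gm z = gg z"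
    and Pb: "\<And>z y. z>0 \<Longrightarrow> y>0 \<Longrightarrow> z\<noteq>1 \<Longrightarrow> y\<noteq>1 \<Longrightarrow> 0 \<le> P z y \<and> min z y * P z y \<le> K * wt \<beta> z * wt \<beta> y"
    and K: "K \<ge> 0"
    and int: "set_integrable lborel {0<..} (\<lambda>z. wt \<beta> z * gg z)"
    and Cb: "(LINT z:{0<..}|lborel. wt \<beta> z * \<bar>gg z\<bar>) \<le> C"
  shows "(\<lambda>n. LINT z:{0<..}|lborel. LINT y:{0<..}|lborel. (min (z+y) (real n) - min z (real n) - min y (real n)) * P z y * gg z * gg y) \<longlonglongrightarrow> 0" (is ?A)
   and "\<bar>LINT z:{0<..}|lborel. LINT y:{0<..}|lborel. (min (z+y) (real n) - min z (real n) - min y (real n)) * P z y * gg z * gg y\<bar> \<le> K * C^2" (is ?B)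
proof -
  define V where "V y = indicator {0<..} y * (wt \<beta> y * \<bar>gm y\<bar>)" for y
  define W where "W = integral\<^sup>L lborel V"
  define h where "h n z y = indicator {0<..} y * ((min (z+y) (real n) - min z (real n) - min y (real n)) * Pm (z,y) * gm z * gm y)" for n :: nat and z y
  define I where "I n z = integral\<^sup>L lborel (h n z)" for n z
  define J where "J n z = indicator {0<..} z * I n z" for n z
  have Vm[measurable]: "V \<in> borel_measurable borel" unfolding V_def[abs_def] by measurable
  have Vnn: "0 \<le> V y" for y unfolding V_def using wt_ge[of y \<beta>] by (auto simp: indicator_def)
  have Vint: "integrable lborel V"
  proof -
    have "integrable lborel (\<lambda>z. indicator {0<..} z *\<^sub>R (wt \<beta> z * gg z))"
      using int unfolding set_integrable_def .
    also have "(\<lambda>z. indicator {0<..} z *\<^sub>R (wt \<beta> z * gg z)) = (\<lambda>z. indicator {0<..} z * (wt \<beta> z * gm z))"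
      using geq by (auto simp: indicator_def fun_eq_iff)
    finally have "integrable lborel (\<lambda>z. \<bar>indicator {0<..} z * (wt \<beta> z * gm z)\<bar>)" by auto
    also have "(\<lambda>z. \<bar>indicator {0<..} z * (wt \<beta> z * gm z)\<bar>) = V"
      using wt_ge by (auto simp: indicator_def fun_eq_iff V_def abs_mult)
    finally show ?thesis .
  qed
  have W_eq: "W = (LINT z:{0<..}|lborel. wt \<beta> z * \<bar>gg z\<bar>)"
    unfolding W_def set_lebesgue_integral_def V_def using geq
    by (intro Bochner_Integration.integral_cong) (auto simp: indicator_def)
  have W0: "0 \<le> W" unfolding W_def using Vnn by (simp add: integral_nonneg)
  have WC: "W \<le> C" using W_eq Cb by simp
  have hm[measurable]: "(\<lambda>(z,y). h n z y) \<in> borel_measurable (lborel \<Otimes>\<^sub>M lborel)" for n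
  proof -
    have Pm2[measurable]: "Pm \<in> borel_measurable (lborel \<Otimes>\<^sub>M lborel)" by (simp add: lborel_prod)
    show ?thesis unfolding h_def by measurable
  qed
  have Im[measurable]: "I n \<in> borel_measurable lborel" for n
    unfolding I_def[abs_def] by (rule lborel.borel_measurable_lebesgue_integral) (use hm in simp)
  have Jm[measurable]: "J n \<in> borel_measurable lborel" for n
    unfolding J_def[abs_def] by measurable
  have hbound: "\<bar>h n z y\<bar> \<le> K * wt \<beta> z * \<bar>gm z\<bar> * V y" if z: "z > 0" "z \<noteq> 1" and y: "y \<noteq> 1" for n z y
  proof (cases "y > 0")
    case True
    have pb: "0 \<le> P z y" "min z y * P z y \<le> K * wt \<beta> z * wt \<beta> y" using Pb[OF z(1) True z(2) y] by auto
    have ob: "\<bar>min (z+y) (real n) - min z (real n) - min y (real n)\<bar> \<le> min z y"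
      using om_bound[OF z(1) True, of "real n"] by simp
    have "\<bar>h n z y\<bar> = \<bar>min (z+y) (real n) - min z (real n) - min y (real n)\<bar> * P z y * (\<bar>gm z\<bar> * \<bar>gm y\<bar>)"
      using True z pb Peq by (simp add: h_def abs_mult)
    also have "\<dots> \<le> min z y * P z y * (\<bar>gm z\<bar> * \<bar>gm y\<bar>)"
      using ob pb by (intro mult_right_mono) auto
    also have "\<dots> \<le> K * wt \<beta> z * wt \<beta> y * (\<bar>gm z\<bar> * \<bar>gm y\<bar>)"
      using pb by (intro mult_right_mono) auto
    also have "\<dots> = K * wt \<beta> z * \<bar>gm z\<bar> * V y" using True by (simp add: V_def)
    finally show ?thesis .
  next
    case False
    then show ?thesis by (simp add: h_def V_def)
  qed
  have Ilim: "(\<lambda>n. I n z) \<longlonglongrightarrow> 0" and Ibound: "\<bar>I n z\<bar> \<le> K * W * V z"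
    if z: "z > 0" "z \<noteq> 1" for n z
  proof -
    have dint: "integrable lborel (\<lambda>y. K * wt \<beta> z * \<bar>gm z\<bar> * V y)" using Vint by simp
    have hmz[measurable]: "h n z \<in> borel_measurable lborel" for n
      unfolding h_def[abs_def] by measurable
    have ae: "AE y in lborel. norm (h n z y) \<le> K * wt \<beta> z * \<bar>gm z\<bar> * V y" for n
      using AE_lborel_singleton[of 1] by eventually_elim (use hbound z in auto)
    have lim: "AE y in lborel. (\<lambda>n. h n z y) \<longlonglongrightarrow> 0"
    proof (intro AE_I2)
      fix y
      have "eventually (\<lambda>n. h n z y = 0) sequentially"
      proof (cases "y > 0")
        case True
        show ?thesis
        proof (rule eventually_sequentiallyI[of "nat \<lceil>z+y\<rceil>"])
          fix n assume "nat \<lceil>z+y\<rceil> \<le> n"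
          hence "z + y \<le> real n" by linarith
          thus "h n z y = 0" using om_zero[OF z(1) True] by (simp add: h_def)
        qed
      qed (auto simp: h_def)
      thus "(\<lambda>n. h n z y) \<longlonglongrightarrow> 0" by (rule tendsto_eventually)
    qed
    have "(\<lambda>n. integral\<^sup>L lborel (h n z)) \<longlonglongrightarrow> 0"
      by (rule integral_dominated_convergence[where f="\<lambda>y. 0", simplified, OF _ dint lim ae]) simp
    thus "(\<lambda>n. I n z) \<longlonglongrightarrow> 0" by (simp add: I_def)
    have hint: "integrable lborel (h n z)"
      by (rule integrable_dominated_convergence2[where f="\<lambda>y. 0", simplified, OF _ dint lim ae]) simp
    have "\<bar>I n z\<bar> \<le> integral\<^sup>L lborel (\<lambda>y. \<bar>h n z y\<bar>)" unfolding I_def by (rule integral_abs_bound)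
    also have "\<dots> \<le> integral\<^sup>L lborel (\<lambda>y. K * wt \<beta> z * \<bar>gm z\<bar> * V y)"
      using ae by (intro integral_mono_AE hint[THEN integrable_abs] dint) auto
    also have "\<dots> = K * wt \<beta> z * \<bar>gm z\<bar> * W" by (simp add: W_def)
    also have "\<dots> = K * W * V z" using z by (simp add: V_def)
    finally show "\<bar>I n z\<bar> \<le> K * W * V z" .
  qed
  have dint2: "integrable lborel (\<lambda>z. K * W * V z)" using Vint by simp
  have ae2: "AE z in lborel. norm (J n z) \<le> K * W * V z" for n
    using AE_lborel_singleton[of 1] by eventually_elim
      (use Ibound in \<open>auto simp: J_def V_def indicator_def\<close>)
  have lim2: "AE z in lborel. (\<lambda>n. J n z) \<longlonglongrightarrow> 0"
    using AE_lborel_singleton[of 1] by eventually_elim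
      (use Ilim in \<open>auto simp: J_def indicator_def\<close>)
  have eqF: "(LINT z:{0<..}|lborel. LINT y:{0<..}|lborel. (min (z+y) (real n) - min z (real n) - min y (real n)) * P z y * gg z * gg y)
     = integral\<^sup>L lborel (J n)" for n
    unfolding J_def I_def h_def set_lebesgue_integral_def
    by (intro Bochner_Integration.integral_cong refl)
       (auto simp: indicator_def Peq geq intro!: Bochner_Integration.integral_cong)
  have "(\<lambda>n. integral\<^sup>L lborel (J n)) \<longlonglongrightarrow> 0"
    by (rule integral_dominated_convergence[where f="\<lambda>y. 0", simplified, OF _ dint2 lim2 ae2]) simp
  thus ?A unfolding eqF by simp
  have Jint: "integrable lborel (J n)"
    by (rule integrable_dominated_convergence2[where f="\<lambda>y. 0", simplified, OF _ dint2 lim2 ae2]) simp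
  have "\<bar>integral\<^sup>L lborel (J n)\<bar> \<le> integral\<^sup>L lborel (\<lambda>z. \<bar>J n z\<bar>)" by (rule integral_abs_bound)
  also have "\<dots> \<le> integral\<^sup>L lborel (\<lambda>z. K * W * V z)"
    using ae2 by (intro integral_mono_AE Jint[THEN integrable_abs] dint2) auto
  also have "\<dots> = K * W * W" by (simp add: W_def)
  also have "\<dots> \<le> K * C^2"
  proof -
    have "W * W \<le> C * C" using W0 WC by (intro mult_mono) auto
    thus ?thesis using K by (simp add: power2_eq_square mult.assoc mult_left_mono)
  qed
  finally show ?B unfolding eqF .
qed



lemma main:
  fixes \<Psi> :: "real \<Rightarrow> real \<Rightarrow> real" and \<beta> k :: real and T :: ereal
    and gin :: "real \<Rightarrow> real" and g :: "real \<Rightarrow> real \<Rightarrow> real"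
  assumes b: "\<beta> > 0" and k: "k > 0"
    and K: "kernel_ok \<Psi> \<beta> k"
    and "T > 0"
    and L1: "in_L1_weighted \<beta> gin"
    and "AE z in lborel. z > 0 \<longrightarrow> 0 \<le> gin z"
    and W: "weak_solution \<Psi> \<beta> T gin g"
    and t: "0 < t" "ereal t < T"
  shows "(\<lambda>n. LINT s:{0<..<t}|lborel.
                    (LINT z:{0<..}|lborel. (LINT y:{0<..}|lborel.
                        (min (z + y) (real n) - min z (real n) - min y (real n)) * \<Psi> z y * g z s * g y s))) \<longlonglongrightarrow> 0"
proof -
  define Pm where "Pm = (\<lambda>p. if 0 < fst p \<and> 0 < snd p then \<Psi> (fst p) (snd p) else 0)"
  define gm where "gm = (\<lambda>p. if 0 < fst p \<and> snd p \<in> time_int T then g (fst p) (snd p) else 0)"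
  have Pm1: "Pm \<in> borel_measurable borel" using K unfolding kernel_ok_def Pm_def by blast
  have Pm2[measurable]: "Pm \<in> borel_measurable (borel \<Otimes>\<^sub>M borel)" using Pm1 by (simp add: borel_prod)
  have gm1: "gm \<in> borel_measurable borel" using W unfolding weak_solution_def gm_def by blast
  have gm2[measurable]: "gm \<in> borel_measurable (borel \<Otimes>\<^sub>M borel)" using gm1 by (simp add: borel_prod)
  obtain C where C: "AE s in lborel. (0 < s \<and> ereal s < T) \<longrightarrow>
          set_integrable lborel {0<..} (\<lambda>z. (z powr (-2*\<beta>) + z) * g z s) \<and>
          (LINT z:{0<..}|lborel. (z powr (-2*\<beta>) + z) * \<bar>g z s\<bar>) \<le> C"
    using W unfolding weak_solution_def by blast
  define F where "F n s = (LINT z:{0<..}|lborel. (LINT y:{0<..}|lborel.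
                        (min (z + y) (real n) - min z (real n) - min y (real n)) * \<Psi> z y * g z s * g y s))" for n :: nat and s
  define F' where "F' n s = (LINT z:{0<..}|lborel. (LINT y:{0<..}|lborel.
                        (min (z + y) (real n) - min z (real n) - min y (real n)) * Pm (z,y) * gm (z,s) * gm (y,s)))" for n :: nat and s
  have F'm[measurable]: "F' n \<in> borel_measurable borel" for n
    unfolding F'_def[abs_def] set_lebesgue_integral_def by measurable
  have FF': "F n s = F' n s" if "0 < s" "s < t" for n s
  proof -
    have st: "s \<in> time_int T" using that t by (auto simp: time_int_def intro: order.strict_trans[of _ "ereal t"])
    show ?thesis unfolding F_def F'_def
      by (intro set_lebesgue_integral_cong ballI allI impI) (auto simp: Pm_def gm_def st)
  qed
  have core_app: "(\<lambda>n. F n s) \<longlonglongrightarrow> 0 \<and> (\<forall>n. \<bar>F n s\<bar> \<le> 2*k * C^2)"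
    if s: "0 < s" "s < t" and i1: "set_integrable lborel {0<..} (\<lambda>z. (z powr (-2*\<beta>) + z) * g z s)"
      and i2: "(LINT z:{0<..}|lborel. (z powr (-2*\<beta>) + z) * \<bar>g z s\<bar>) \<le> C" for s
  proof -
    have st: "s \<in> time_int T" using that t by (auto simp: time_int_def intro: order.strict_trans[of _ "ereal t"])
    have gms: "(\<lambda>z. gm (z, s)) \<in> borel_measurable borel" by measurable
    have geq: "\<And>z. z>0 \<Longrightarrow> gm (z,s) = g z s" using st by (simp add: gm_def)
    have Peq: "\<And>z y. z>0 \<Longrightarrow> y>0 \<Longrightarrow> Pm (z,y) = \<Psi> z y" by (simp add: Pm_def)
    have Pb: "\<And>z y. z>0 \<Longrightarrow> y>0 \<Longrightarrow> z\<noteq>1 \<Longrightarrow> y\<noteq>1 \<Longrightarrow> 0 \<le> \<Psi> z y \<and> min z y * \<Psi> z y \<le> (2*k) * wt \<beta> z * wt \<beta> y"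
      using kernel_bound[OF K b k] K unfolding kernel_ok_def by auto
    have j1: "set_integrable lborel {0<..} (\<lambda>z. wt \<beta> z * g z s)" using i1 by (simp add: wt_def)
    have j2: "(LINT z:{0<..}|lborel. wt \<beta> z * \<bar>g z s\<bar>) \<le> C" using i2 by (simp add: wt_def)
    note c = core[OF Pm1 Peq gms geq Pb _ j1 j2]
    show ?thesis unfolding F_def using c k by auto
  qed
  define S where "S n s = indicator {0<..<t} s * F n s" for n s
  have Sm[measurable]: "S n \<in> borel_measurable lborel" for n
  proof -
    have "S n = (\<lambda>s. indicator {0<..<t} s * F' n s)"
      using FF' by (auto simp: S_def fun_eq_iff indicator_def)
    thus ?thesis by simp
  qed
  have dint: "integrable lborel (\<lambda>s. 2*k*C^2 * indicator {0<..<t} s)"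
    by (intro integrable_mult_right) (use t in \<open>simp add: integrable_indicator_iff emeasure_lborel_Ioo\<close>)
  have lim: "AE s in lborel. (\<lambda>n. S n s) \<longlonglongrightarrow> 0"
    using C
  proof eventually_elim
    case (elim s)
    show ?case
    proof (cases "0 < s \<and> s < t")
      case True
      hence "ereal s < T" using t by (auto intro: order.strict_trans[of _ "ereal t"])
      with True elim core_app[of s] show ?thesis by (simp add: S_def)
    qed (auto simp: S_def)
  qed
  have ae: "AE s in lborel. norm (S n s) \<le> 2*k*C^2 * indicator {0<..<t} s" for n
    using C
  proof eventually_elim
    case (elim s)
    show ?case
    proof (cases "0 < s \<and> s < t")
      case True
      hence "ereal s < T" using t by (auto intro: order.strict_trans[of _ "ereal t"])
      with True elim core_app[of s] show ?thesis by (simp add: S_def)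
    qed (auto simp: S_def)
  qed
  have "(\<lambda>n. integral\<^sup>L lborel (S n)) \<longlonglongrightarrow> 0"
    by (rule integral_dominated_convergence[where f="\<lambda>y. 0", simplified, OF _ dint lim ae]) simp
  thus ?thesis unfolding set_lebesgue_integral_def S_def F_def by simp
qed



theorem theorem3p1:
  fixes \<Psi> :: "real \<Rightarrow> real \<Rightarrow> real" and \<beta> k :: real and T :: ereal
    and gin :: "real \<Rightarrow> real" and g :: "real \<Rightarrow> real \<Rightarrow> real"
  assumes "\<beta> > 0" and "k > 0"
    and "kernel_ok \<Psi> \<beta> k"
    and "T > 0"
    and "in_L1_weighted \<beta> gin"
    and "AE z in lborel. z > 0 \<longrightarrow> 0 \<le> gin z"
    and "weak_solution \<Psi> \<beta> T gin g"
  shows "\<forall>t. 0 < t \<and> ereal t < T \<longrightarrow>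
           (LINT z:{0<..}|lborel. z * g z t) = (LINT z:{0<..}|lborel. z * gin z)"
proof (intro allI impI)
  fix t assume tt: "0 < t \<and> ereal t < T"
  hence t: "0 < t" "ereal t < T" by auto
  have W: "weak_solution \<Psi> \<beta> T gin g" by fact
  have tI: "t \<in> time_int T" using t by (simp add: time_int_def)
  note Rlim = main[OF assms(1-7) t]
  have gnn: "AE z in lborel. z > 0 \<longrightarrow> 0 \<le> g z t" using W tI unfolding weak_solution_def by blast
  have gint: "integrable lborel (\<lambda>z. indicator {0<..} z * g z t)"
    using W tI unfolding weak_solution_def set_integrable_def by auto
  have gintm[measurable]: "(\<lambda>z. indicator {0<..} z * g z t) \<in> borel_measurable borel"
    using gint by (auto dest: borel_measurable_integrable)
  define Gw where "Gw z = indicator {0<..} z * (wt \<beta> z * gin z)" for z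
  have Gwint: "integrable lborel Gw"
    using assms(5) unfolding in_L1_weighted_def set_integrable_def Gw_def wt_def by simp
  have Gwm[measurable]: "Gw \<in> borel_measurable borel"
    using Gwint by (auto dest: borel_measurable_integrable)
  have wtpos: "z > 0 \<Longrightarrow> wt \<beta> z > 0" for z using wt_ge[of z \<beta>] by linarith
  define a where "a n = (LINT z:{0<..}|lborel. g z t * min z (real n))" for n :: nat
  define bb where "bb n = (LINT z:{0<..}|lborel. gin z * min z (real n))" for n :: nat
  define M where "M = (LINT z:{0<..}|lborel. z * gin z)"
  have ga_int: "integrable lborel (\<lambda>z. indicator {0<..} z * (g z t * min z (real n)))" for n :: nat
  proof (rule Bochner_Integration.integrable_bound[OF integrable_mult_right[OF gint, of "real n"]])
    have "(\<lambda>z. indicator {0<..} z * (g z t * min z (real n))) = (\<lambda>z. (indicator {0<..} z * g z t) * min z (real n))"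
      by (simp add: fun_eq_iff)
    thus "(\<lambda>z. indicator {0<..} z * (g z t * min z (real n))) \<in> borel_measurable lborel" by simp
    show "AE z in lborel. norm (indicator {0<..} z * (g z t * min z (real n))) \<le> norm (real n * (indicator {0<..} z * g z t))"
      by (intro AE_I2) (auto simp: indicator_def abs_mult min_def mult.commute intro: mult_right_mono)
  qed
  have gin_int: "integrable lborel (\<lambda>z. indicator {0<..} z * (gin z * min z (real n)))" for n :: nat
  proof (rule Bochner_Integration.integrable_bound[OF Gwint])
    have "(\<lambda>z. indicator {0<..} z * (gin z * min z (real n))) = (\<lambda>z. Gw z * (min z (real n) / wt \<beta> z))"
      by (auto simp: fun_eq_iff Gw_def indicator_def dest: wtpos)
    thus "(\<lambda>z. indicator {0<..} z * (gin z * min z (real n))) \<in> borel_measurable lborel" by simp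
    show "AE z in lborel. norm (indicator {0<..} z * (gin z * min z (real n))) \<le> norm (Gw z)"
    proof (intro AE_I2)
      fix z show "norm (indicator {0<..} z * (gin z * min z (real n))) \<le> norm (Gw z)"
      proof (cases "z > 0")
        case True
        have "\<bar>min z (real n)\<bar> \<le> \<bar>wt \<beta> z\<bar>" using True wt_ge[of z \<beta>] by (auto simp: min_def)
        then have "\<bar>gin z\<bar> * \<bar>min z (real n)\<bar> \<le> \<bar>gin z\<bar> * \<bar>wt \<beta> z\<bar>" by (intro mult_left_mono) auto
        thus ?thesis using True by (simp add: Gw_def abs_mult mult.commute)
      qed (simp add: Gw_def)
    qed
  qed
  have zgin_m: "(\<lambda>z. indicator {0<..} z * (z * gin z)) \<in> borel_measurable lborel"
  proof -
    have "(\<lambda>z. indicator {0<..} z * (z * gin z)) = (\<lambda>z. Gw z * (z / wt \<beta> z))"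
      by (auto simp: fun_eq_iff Gw_def indicator_def dest: wtpos)
    thus ?thesis by simp
  qed
  have blim: "bb \<longlonglongrightarrow> M"
  proof -
    have "(\<lambda>n. integral\<^sup>L lborel (\<lambda>z. indicator {0<..} z * (gin z * min z (real n))))
        \<longlonglongrightarrow> integral\<^sup>L lborel (\<lambda>z. indicator {0<..} z * (z * gin z))"
    proof (rule integral_dominated_convergence[where w="\<lambda>z. \<bar>Gw z\<bar>"])
      show "(\<lambda>z. indicator {0<..} z * (z * gin z)) \<in> borel_measurable lborel" by (rule zgin_m)
      show "(\<lambda>z. indicator {0<..} z * (gin z * min z (real n))) \<in> borel_measurable lborel" for n
        using gin_int[of n] by (rule borel_measurable_integrable)
      show "integrable lborel (\<lambda>z. \<bar>Gw z\<bar>)" using Gwint by simp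
      show "AE z in lborel. (\<lambda>n. indicator {0<..} z * (gin z * min z (real n))) \<longlonglongrightarrow> indicator {0<..} z * (z * gin z)"
      proof (intro AE_I2)
        fix z :: real
        have "eventually (\<lambda>n. indicator {0<..} z * (gin z * min z (real n)) = indicator {0<..} z * (z * gin z)) sequentially"
        proof (rule eventually_sequentiallyI[of "nat \<lceil>z\<rceil>"])
          fix n assume "nat \<lceil>z\<rceil> \<le> n"
          hence "z \<le> real n" by linarith
          thus "indicator {0<..} z * (gin z * min z (real n)) = indicator {0<..} z * (z * gin z)"
            by (simp add: min_def)
        qed
        thus "(\<lambda>n. indicator {0<..} z * (gin z * min z (real n))) \<longlonglongrightarrow> indicator {0<..} z * (z * gin z)"
          by (rule tendsto_eventually)
      qed
      show "AE z in lborel. norm (indicator {0<..} z * (gin z * min z (real n))) \<le> \<bar>Gw z\<bar>" for n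
      proof (intro AE_I2)
        fix z show "norm (indicator {0<..} z * (gin z * min z (real n))) \<le> \<bar>Gw z\<bar>"
        proof (cases "z > 0")
          case True
          have "\<bar>min z (real n)\<bar> \<le> \<bar>wt \<beta> z\<bar>" using True wt_ge[of z \<beta>] by (auto simp: min_def)
          then have "\<bar>gin z\<bar> * \<bar>min z (real n)\<bar> \<le> \<bar>gin z\<bar> * \<bar>wt \<beta> z\<bar>" by (intro mult_left_mono) auto
        thus ?thesis using True by (simp add: Gw_def abs_mult mult.commute)
        qed (simp add: Gw_def)
      qed
    qed
    thus ?thesis unfolding bb_def M_def set_lebesgue_integral_def by simp
  qed
  have weq: "a n - bb n = 1/2 * (LINT s:{0<..<t}|lborel.
                    (LINT z:{0<..}|lborel. (LINT y:{0<..}|lborel.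
                        (min (z + y) (real n) - min z (real n) - min y (real n)) * \<Psi> z y * g z s * g y s)))" for n :: nat
  proof -
    have om: "(\<lambda>z. min z (real n)) \<in> borel_measurable lborel \<and> bounded ((\<lambda>z. min z (real n)) ` {0<..})"
      by (auto simp: bounded_iff intro!: exI[of _ "real n"])
    have "(LINT z:{0<..}|lborel. (g z t - gin z) * min z (real n)) = 1/2 * (LINT s:{0<..<t}|lborel.
                    (LINT z:{0<..}|lborel. (LINT y:{0<..}|lborel.
                        (min (z + y) (real n) - min z (real n) - min y (real n)) * \<Psi> z y * g z s * g y s)))"
      using W t om unfolding weak_solution_def by blast
    moreover have "(LINT z:{0<..}|lborel. (g z t - gin z) * min z (real n)) = a n - bb n"
    proof -
      have "(LINT z:{0<..}|lborel. (g z t - gin z) * min z (real n)) =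
         integral\<^sup>L lborel (\<lambda>z. indicator {0<..} z * (g z t * min z (real n)) - indicator {0<..} z * (gin z * min z (real n)))"
        unfolding set_lebesgue_integral_def by (intro Bochner_Integration.integral_cong) (auto simp: algebra_simps)
      also have "\<dots> = a n - bb n"
        unfolding a_def bb_def set_lebesgue_integral_def using ga_int gin_int by simp
      finally show ?thesis .
    qed
    ultimately show ?thesis by simp
  qed
  have "(\<lambda>n. a n - bb n) \<longlonglongrightarrow> 1/2 * 0" unfolding weq by (intro tendsto_mult Rlim tendsto_const)
  hence alim: "a \<longlonglongrightarrow> M" using tendsto_add[OF _ blim] by (force)
  have "integral\<^sup>L lborel (\<lambda>z. indicator {0<..} z * (z * g z t)) = M"
  proof (rule integral_monotone_convergence[where f="\<lambda>n z. indicator {0<..} z * (g z t * min z (real n))"])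
    show "integrable lborel (\<lambda>z. indicator {0<..} z * (g z t * min z (real n)))" for n by (rule ga_int)
    show "AE z in lborel. mono (\<lambda>n. indicator {0<..} z * (g z t * min z (real n)))"
      using gnn
    proof eventually_elim
      case (elim z)
      show ?case
      proof (rule monoI)
        fix m n :: nat assume "m \<le> n"
        hence "min z (real m) \<le> min z (real n)" by (auto simp: min_def)
        thus "indicator {0<..} z * (g z t * min z (real m)) \<le> indicator {0<..} z * (g z t * min z (real n))"
          using elim by (auto simp: indicator_def intro: mult_left_mono)
      qed
    qed
    show "AE z in lborel. (\<lambda>n. indicator {0<..} z * (g z t * min z (real n))) \<longlonglongrightarrow> indicator {0<..} z * (z * g z t)"
    proof (intro AE_I2)
      fix z :: real
      have "eventually (\<lambda>n. indicator {0<..} z * (g z t * min z (real n)) = indicator {0<..} z * (z * g z t)) sequentially"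
      proof (rule eventually_sequentiallyI[of "nat \<lceil>z\<rceil>"])
        fix n assume "nat \<lceil>z\<rceil> \<le> n"
        hence "z \<le> real n" by linarith
        thus "indicator {0<..} z * (g z t * min z (real n)) = indicator {0<..} z * (z * g z t)"
          by (simp add: min_def)
      qed
      thus "(\<lambda>n. indicator {0<..} z * (g z t * min z (real n))) \<longlonglongrightarrow> indicator {0<..} z * (z * g z t)"
        by (rule tendsto_eventually)
    qed
    show "(\<lambda>n. integral\<^sup>L lborel (\<lambda>z. indicator {0<..} z * (g z t * min z (real n)))) \<longlonglongrightarrow> M"
      using alim unfolding a_def set_lebesgue_integral_def by simp
    have "(\<lambda>z. indicator {0<..} z * (z * g z t)) = (\<lambda>z. (indicator {0<..} z * g z t) * z)"
      by (simp add: fun_eq_iff)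
    thus "(\<lambda>z. indicator {0<..} z * (z * g z t)) \<in> borel_measurable lborel" by simp
  qed
  thus "(LINT z:{0<..}|lborel. z * g z t) = (LINT z:{0<..}|lborel. z * gin z)"
    unfolding M_def set_lebesgue_integral_def by simp
qed

end
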